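(* Let $X$ be a convex metric space over a Boolean ring $B$, $0\in X$, $R=\{x_{1},\ldots,x_{n}\}$ a referential of $(X,0)$, and $x\in X$. There is a unique tuple $(a_{1},\ldots,a_{n})\in B^{n}$ such that: (1) $a_{i}a_{j}=0$ whenever $i\neq j$; (2) $x=\sum_{i=1}^{n}a_{i}x_{i}$ (orthogonal combination); (3) $a_{i}\le |x_{i}|$ for $i=1,\ldots,n$.
   Context: $B$ is a Boolean ring ($a\vee b=a+b+ab$, $a\le b\iff ab=a$; $a_1\oplus\cdots\oplus a_n$ denotes a sum of pairwise disjoint elements). A Boolean metric space over $B$: set $X$ with $d:X\times X\to B$, $d(x,y)=0\iff x=y$, symmetric, $d(x,z)\le d(x,y)\vee d(y,z)$. For $y_1,\dots,y_m\in X$, $b_i\in B$ with $b_1\oplus\cdots\oplus b_m=1$, $y$ is a convex combination of the $y_i$ with coefficients $b_i$ if $b_id(y,y_i)=0$ for all $i$ (unique when it exists); $X$ is convex if all such combinations exist. In $(X,0)$: $|x|=d(0,x)$. For pairwise disjoint $a_1,\dots,a_n\in B$, the orthogonal combination $\sum_{i=1}^n a_ix_i$ denotes the convex combination of $0,x_1,\dots,x_n$ with coefficients $a_0,a_1,\dots,a_n$ where $a_0=1+a_1+\cdots+a_n$. $x\perp y$ iff $d(x,y)=|x|\vee|y|$; a finite $R\subseteq X$ is orthogonal if $0\notin R$ and distinct elements are orthogonal; a referential of $(X,0)$ is an orthogonal $R$ such that every element of $X$ is a convex combination of elements of $R\cup\{0\}$. *)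

theory Defs
  imports Main
begin

definition bleq :: "'b::comm_ring_1 \<Rightarrow> 'b \<Rightarrow> bool" where
  "bleq a b \<longleftrightarrow> a * b = a"

definition bjoin :: "'b::comm_ring_1 \<Rightarrow> 'b \<Rightarrow> 'b" where
  "bjoin a b = a + b + a * b"

definition pairwise_disj :: "'b::comm_ring_1 list \<Rightarrow> bool" where
  "pairwise_disj bs \<longleftrightarrow>
     (\<forall>i<length bs. \<forall>j<length bs. i \<noteq> j \<longrightarrow> bs ! i * bs ! j = 0)"

definition bool_metric :: "'x set \<Rightarrow> ('x \<Rightarrow> 'x \<Rightarrow> 'b::comm_ring_1) \<Rightarrow> bool" where
  "bool_metric X d \<longleftrightarrow>
     (\<forall>x\<in>X. \<forall>y\<in>X. d x y = 0 \<longleftrightarrow> x = y) \<and>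
     (\<forall>x\<in>X. \<forall>y\<in>X. d x y = d y x) \<and>
     (\<forall>x\<in>X. \<forall>y\<in>X. \<forall>z\<in>X. bleq (d x z) (bjoin (d x y) (d y z)))"

definition is_conv_comb :: "('x \<Rightarrow> 'x \<Rightarrow> 'b::comm_ring_1) \<Rightarrow> 'x \<Rightarrow> 'x list \<Rightarrow> 'b list \<Rightarrow> bool" where
  "is_conv_comb d y ys bs \<longleftrightarrow>
     length ys = length bs \<and> pairwise_disj bs \<and> sum_list bs = 1 \<and>
     (\<forall>i<length ys. bs ! i * d y (ys ! i) = 0)"

definition convex_bms :: "'x set \<Rightarrow> ('x \<Rightarrow> 'x \<Rightarrow> 'b::comm_ring_1) \<Rightarrow> bool" where
  "convex_bms X d \<longleftrightarrow>
     (\<forall>ys bs. set ys \<subseteq> X \<and> length ys = length bs \<and> pairwise_disj bs \<and> sum_list bs = 1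
        \<longrightarrow> (\<exists>y\<in>X. is_conv_comb d y ys bs))"

text \<open>Orthogonal combination: x = sum a_i x_i, i.e. x is the convex combination of
  0, x_1..x_n with coefficients 1 + a_1 + ... + a_n, a_1, ..., a_n.\<close>
definition orth_comb :: "('x \<Rightarrow> 'x \<Rightarrow> 'b::comm_ring_1) \<Rightarrow> 'x \<Rightarrow> 'x \<Rightarrow> 'x list \<Rightarrow> 'b list \<Rightarrow> bool" where
  "orth_comb d z x xs as \<longleftrightarrow>
     length xs = length as \<and> is_conv_comb d x (z # xs) ((1 + sum_list as) # as)"

definition bperp :: "('x \<Rightarrow> 'x \<Rightarrow> 'b::comm_ring_1) \<Rightarrow> 'x \<Rightarrow> 'x \<Rightarrow> 'x \<Rightarrow> bool" where
  "bperp d z x y \<longleftrightarrow> d x y = bjoin (d z x) (d z y)"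

definition referential :: "'x set \<Rightarrow> ('x \<Rightarrow> 'x \<Rightarrow> 'b::comm_ring_1) \<Rightarrow> 'x \<Rightarrow> 'x set \<Rightarrow> bool" where
  "referential X d z R \<longleftrightarrow>
     finite R \<and> R \<subseteq> X \<and> z \<notin> R \<and>
     (\<forall>x\<in>R. \<forall>y\<in>R. x \<noteq> y \<longrightarrow> bperp d z x y) \<and>
     (\<forall>x\<in>X. \<exists>ys bs. set ys \<subseteq> R \<union> {z} \<and> is_conv_comb d x ys bs)"

end

theory Submission
  imports Defs
begin

lemma sl_nth: "sum_list (xs::'b::comm_ring_1 list) = (\<Sum>i<length xs. xs ! i)"
  by (simp add: sum_list_sum_nth lessThan_atLeast0)

lemma char2:
  fixes a :: "'b::comm_ring_1"
  assumes idem: "\<And>a::'b. a * a = a"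
  shows "a + a = 0"
proof -
  have "(a+a)*(a+a) = a+a" by (rule idem)
  moreover have "(a+a)*(a+a) = (a*a+a*a)+(a*a+a*a)" by (simp only: distrib_left distrib_right)
  ultimately have "(a+a)+(a+a) = 0+(a+a)" by (simp only: idem add_0_left)
  thus ?thesis by (rule add_right_imp_eq)
qed

lemma tri:
  fixes d :: "'x \<Rightarrow> 'x \<Rightarrow> 'b::comm_ring_1"
  assumes "bool_metric X d" "p \<in> X" "q \<in> X" "r \<in> X" and cA: "c * d p q = 0"
  shows "c * d p r = c * d p r * d q r"
proof -
  have h: "d p r * (d p q + d q r + d p q * d q r) = d p r"
    using assms unfolding bool_metric_def bleq_def bjoin_def by blast
  have "c * d p r = c * (d p r * (d p q + d q r + d p q * d q r))" using h by simp
  also have "... = (c * d p q) * (d p r + d p r * d q r) + c * d p r * d q r"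
    by (simp add: algebra_simps)
  also have "... = c * d p r * d q r" using cA by simp
  finally show ?thesis .
qed

lemma sel:
  fixes bs :: "'b::comm_ring_1 list"
  assumes idem: "\<And>a::'b. a * a = a" and pd: "pairwise_disj bs" and k: "k < length bs"
  shows "bs ! k * (\<Sum>l<length bs. if P l then bs ! l else 0) = (if P k then bs ! k else 0)"
proof -
  have "bs ! k * (\<Sum>l<length bs. if P l then bs ! l else 0)
      = (\<Sum>l<length bs. if l = k then (if P k then bs ! k else 0) else 0)"
    unfolding sum_distrib_left
  proof (rule sum.cong)
    fix l assume "l \<in> {..<length bs}"
    thus "bs ! k * (if P l then bs ! l else 0) = (if l = k then (if P k then bs ! k else 0) else 0)"
      using pd k idem unfolding pairwise_disj_def by auto
  qed simp
  also have "... = (if P k then bs ! k else 0)" using k by simp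
  finally show ?thesis .
qed

lemma genG:
  fixes as :: "'b::comm_ring_1 list"
  assumes idem: "\<And>a::'b. a * a = a" and pd: "pairwise_disj as"
  shows "pairwise_disj ((1 + sum_list as) # as) \<and> sum_list ((1 + sum_list as) # as) = 1"
proof -
  have sj: "sum_list as * as ! j = as ! j" if j: "j < length as" for j
  proof -
    have "sum_list as * as ! j = (\<Sum>i<length as. if i = j then as ! j else 0)"
      unfolding sl_nth sum_distrib_right
      by (rule sum.cong) (use pd idem j in \<open>auto simp: pairwise_disj_def\<close>)
    also have "... = as ! j" using j by simp
    finally show ?thesis .
  qed
  have z1: "(1 + sum_list as) * as ! j = 0" if "j < length as" for j
    using sj[OF that] char2[OF idem, of "as ! j"] by (simp add: algebra_simps)
  have "pairwise_disj ((1 + sum_list as) # as)"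
    unfolding pairwise_disj_def
  proof (intro allI impI)
    fix i j assume i: "i < length ((1 + sum_list as) # as)" and j: "j < length ((1 + sum_list as) # as)"
      and ij: "i \<noteq> j"
    show "((1 + sum_list as) # as) ! i * ((1 + sum_list as) # as) ! j = 0"
    proof (cases i)
      case 0
      then obtain j' where "j = Suc j'" using ij by (cases j) auto
      thus ?thesis using 0 j z1 by simp
    next
      case (Suc i')
      show ?thesis
      proof (cases j)
        case 0 thus ?thesis using Suc i z1 by (simp add: mult.commute)
      next
        case (Suc j') thus ?thesis using \<open>i = Suc i'\<close> i j ij pd unfolding pairwise_disj_def by auto
      qed
    qed
  qed
  moreover have "sum_list ((1 + sum_list as) # as) = 1"
    using char2[OF idem, of "sum_list as"] by (simp add: algebra_simps)
  ultimately show ?thesis by blast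
qed

lemma oc_parts:
  assumes "orth_comb d z x xs as"
  shows "length as = length xs" "(1 + sum_list as) * d x z = 0"
    "\<And>i. i < length xs \<Longrightarrow> as ! i * d x (xs ! i) = 0"
proof -
  have A: "\<forall>i<length (z # xs). ((1 + sum_list as) # as) ! i * d x ((z # xs) ! i) = 0"
    and L: "length xs = length as"
    using assms unfolding orth_comb_def is_conv_comb_def by auto
  show "length as = length xs" using L by simp
  show "(1 + sum_list as) * d x z = 0" using A[rule_format, of 0] by simp
  show "as ! i * d x (xs ! i) = 0" if "i < length xs" for i
    using A[rule_format, of "Suc i"] that by simp
qed

lemma cross_zero:
  fixes d :: "'x \<Rightarrow> 'x \<Rightarrow> 'b::comm_ring_1"
  assumes idem: "\<And>a::'b. a * a = a" and bm: "bool_metric X d"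
    and X: "x \<in> X" "u \<in> X" "v \<in> X"
    and pu: "p * d x u = 0" and pv: "p * d x v = 0"
    and dv: "d u v = bjoin (d z u) (d z w)" and pz: "p * d z u = p"
  shows "p = 0"
proof -
  have sym: "d x u = d u x" using bm X unfolding bool_metric_def by blast
  have "p * d u v = p * d u v * d x v"
    by (rule tri[OF bm X(2) X(1) X(3)]) (use pu sym in simp)
  also have "... = d u v * (p * d x v)" by (simp add: algebra_simps)
  finally have "p * d u v = 0" using pv by simp
  moreover have "p * d u v = p + (p * d z w + p * d z w)"
    unfolding dv bjoin_def using pz
    by (simp add: algebra_simps) (metis mult.assoc)
  ultimately show "p = 0" using char2[OF idem, of "p * d z w"] by simp
qed

lemma uniq:
  fixes d :: "'x \<Rightarrow> 'x \<Rightarrow> 'b::comm_ring_1"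
  assumes idem: "\<And>a::'b. a * a = a" and bm: "bool_metric X d"
    and zX: "z \<in> X" and xX: "x \<in> X" and xsX: "set xs \<subseteq> X" and dist: "distinct xs"
    and orth: "\<forall>u\<in>set xs. \<forall>v\<in>set xs. u \<noteq> v \<longrightarrow> bperp d z u v"
    and oa: "orth_comb d z x xs as" and ob: "orth_comb d z x xs bs"
    and la: "\<forall>i<length xs. bleq (as ! i) (d z (xs ! i))"
  shows "\<forall>i<length xs. as ! i = as ! i * bs ! i"
proof (intro allI impI)
  fix i assume i: "i < length xs"
  note A = oc_parts[OF oa] and B = oc_parts[OF ob]
  have xiX: "xs ! i \<in> X" using i xsX by auto
  have pz: "as ! i * bs ! k * d z (xs ! i) = as ! i * bs ! k" for k
  proof -
    have "as ! i * d z (xs ! i) = as ! i" using la i unfolding bleq_def by simp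
    thus ?thesis by (metis mult.assoc mult.commute)
  qed
  have c0: "as ! i * (1 + sum_list bs) = 0"
  proof (rule cross_zero[OF idem bm xX xiX zX _ _ _ _ ])
    show "as ! i * (1 + sum_list bs) * d x (xs ! i) = 0"
      using A(3)[OF i] by (metis mult.assoc mult.commute mult_zero_right)
    show "as ! i * (1 + sum_list bs) * d x z = 0"
      using B(2) by (metis mult.assoc mult.commute mult_zero_right)
    have "d z z = 0" "d (xs ! i) z = d z (xs ! i)" using bm zX xiX unfolding bool_metric_def by auto
    thus "d (xs ! i) z = bjoin (d z (xs ! i)) (d z z)" by (simp add: bjoin_def)
    have "as ! i * d z (xs ! i) = as ! i" using la i unfolding bleq_def by simp
    thus "as ! i * (1 + sum_list bs) * d z (xs ! i) = as ! i * (1 + sum_list bs)"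
      by (metis mult.assoc mult.commute)
  qed
  have cj: "as ! i * bs ! j = 0" if j: "j < length xs" "j \<noteq> i" for j
  proof -
    have xjX: "xs ! j \<in> X" using j xsX by auto
    have ne: "xs ! i \<noteq> xs ! j" using dist i j by (simp add: nth_eq_iff_index_eq)
    show ?thesis
    proof (rule cross_zero[OF idem bm xX xiX xjX _ _ _ pz])
      show "as ! i * bs ! j * d x (xs ! i) = 0" using A(3)[OF i] by (metis mult.assoc mult.commute mult_zero_right)
      show "as ! i * bs ! j * d x (xs ! j) = 0" using B(3)[OF j(1)] by (metis mult.assoc mult.commute mult_zero_right)
      show "d (xs ! i) (xs ! j) = bjoin (d z (xs ! i)) (d z (xs ! j))"
        using orth ne i j unfolding bperp_def by auto
    qed
  qed
  have "as ! i * sum_list bs = (\<Sum>j<length xs. if j = i then as ! i * bs ! i else 0)"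
    unfolding sl_nth sum_distrib_left B(1)
    by (rule sum.cong) (use cj in auto)
  also have "... = as ! i * bs ! i" using i by simp
  finally have "as ! i * sum_list bs = as ! i * bs ! i" .
  moreover have "as ! i = as ! i * (1 + sum_list bs) + as ! i * sum_list bs"
    using char2[OF idem, of "as ! i * sum_list bs"] by (simp add: algebra_simps)
  ultimately show "as ! i = as ! i * bs ! i" using c0 by simp
qed

lemma exist:
  fixes d :: "'x \<Rightarrow> 'x \<Rightarrow> 'b::comm_ring_1"
  assumes idem: "\<And>a::'b. a * a = a" and bm: "bool_metric X d"
    and zX: "z \<in> X" and xX: "x \<in> X" and xsX: "set xs \<subseteq> X" and dist: "distinct xs"
    and zn: "z \<notin> set xs"
    and ys: "set ys \<subseteq> set xs \<union> {z}" and cc: "is_conv_comb d x ys bs"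
  shows "\<exists>as. length as = length xs \<and> pairwise_disj as \<and> orth_comb d z x xs as \<and>
           (\<forall>i<length xs. bleq (as ! i) (d z (xs ! i)))"
proof -
  define m where "m = length bs"
  define n where "n = length xs"
  have lys: "length ys = m" and pd: "pairwise_disj bs" and s1: "sum_list bs = 1"
    and cz: "\<And>k. k < m \<Longrightarrow> bs ! k * d x (ys ! k) = 0"
    using cc unfolding is_conv_comb_def m_def by auto
  define c where "c i = (\<Sum>l<m. if ys ! l = xs ! i then bs ! l else 0)" for i
  define a where "a i = c i * d z (xs ! i)" for i
  define as where "as = map a [0..<n]"
  have las: "length as = n" unfolding as_def by simp
  have asi: "as ! i = a i" if "i < n" for i using that unfolding as_def by simp
  have selc: "bs ! k * c i = (if ys ! k = xs ! i then bs ! k else 0)" if "k < m" for k i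
    unfolding c_def m_def using sel[OF idem pd, of k "\<lambda>l. ys ! l = xs ! i"] that m_def by simp
  have F1: "a i * d x (xs ! i) = 0" for i
  proof -
    have "c i * d x (xs ! i) = (\<Sum>l<m. 0)"
      unfolding c_def sum_distrib_right
    proof (rule sum.cong)
      fix l assume "l \<in> {..<m}"
      hence "bs ! l * d x (ys ! l) = 0" using cz by simp
      thus "(if ys ! l = xs ! i then bs ! l else 0) * d x (xs ! i) = 0" by auto
    qed simp
    thus ?thesis unfolding a_def by (metis mult.assoc mult.commute mult_zero_right sum.neutral_const)
  qed
  have F2: "a i * a j = 0" if "i < n" "j < n" "i \<noteq> j" for i j
  proof -
    have ne: "xs ! i \<noteq> xs ! j" using dist that by (simp add: nth_eq_iff_index_eq n_def)
    have "c i * c j = (\<Sum>l<m. 0)"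
      unfolding c_def[of i] sum_distrib_right
    proof (rule sum.cong)
      fix l assume l: "l \<in> {..<m}"
      have "bs ! l * c j = (if ys ! l = xs ! j then bs ! l else 0)" using selc l by simp
      thus "(if ys ! l = xs ! i then bs ! l else 0) * c j = 0" using ne by auto
    qed simp
    hence "c i * c j = 0" by simp
    thus ?thesis unfolding a_def by (metis mult.assoc mult.commute mult_zero_right)
  qed
  have pdas: "pairwise_disj as" unfolding pairwise_disj_def las using F2 asi by auto
  have F3: "bleq (as ! i) (d z (xs ! i))" if "i < n" for i
    unfolding bleq_def asi[OF that] a_def by (simp add: mult.assoc idem)
  define S where "S = sum_list as"
  have Ssum: "S = (\<Sum>i<n. a i)" unfolding S_def sl_nth las using asi by simp
  have F4: "(1 + S) * d x z = 0"
  proof -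
    have tm: "bs ! k * (1 + S) * d x z = 0" if k: "k < m" for k
    proof -
      have bS: "bs ! k * S = (\<Sum>i<n. (if ys ! k = xs ! i then bs ! k else 0) * d z (xs ! i))"
        unfolding Ssum sum_distrib_left a_def
        by (rule sum.cong) (use selc[OF k] in \<open>auto simp: mult.assoc[symmetric]\<close>)
      have "ys ! k \<in> set xs \<union> {z}" using ys k lys nth_mem[of k ys] by blast
      then show ?thesis
      proof
        assume "ys ! k \<in> set xs"
        then obtain i0 where i0: "i0 < n" "ys ! k = xs ! i0" by (auto simp: in_set_conv_nth n_def)
        have "bs ! k * S = (\<Sum>i<n. if i = i0 then bs ! k * d z (xs ! i0) else 0)"
          unfolding bS
          by (rule sum.cong) (use i0 dist in \<open>auto simp: nth_eq_iff_index_eq n_def\<close>)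
        also have "... = bs ! k * d z (xs ! i0)" using i0 by simp
        finally have bS2: "bs ! k * S = bs ! k * d z (xs ! i0)" .
        have x0X: "xs ! i0 \<in> X" using i0 xsX n_def by auto
        have h0: "bs ! k * d x (xs ! i0) = 0" using cz[OF k] i0 by simp
        have tr: "bs ! k * d x z = bs ! k * d x z * d (xs ! i0) z"
          by (rule tri[OF bm xX x0X zX h0])
        have sy: "d (xs ! i0) z = d z (xs ! i0)" using bm x0X zX unfolding bool_metric_def by blast
        have e0: "bs ! k * (1 + S) * d x z = bs ! k * d x z + bs ! k * S * d x z"
          by (simp add: algebra_simps)
        have e1: "bs ! k * d x z = bs ! k * d x z * d z (xs ! i0)" using tr sy by simp
        have e2: "bs ! k * S * d x z = bs ! k * d x z * d z (xs ! i0)"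
          using bS2 by (metis mult.assoc mult.commute)
        have "bs ! k * d x z + bs ! k * S * d x z
            = bs ! k * d x z * d z (xs ! i0) + bs ! k * d x z * d z (xs ! i0)"
          by (subst e2, subst (1) e1, rule refl)
        also have "... = 0" by (rule char2[OF idem])
        finally have "bs ! k * d x z + bs ! k * S * d x z = 0" .
        with e0 show ?thesis by simp
      next
        assume "ys ! k \<in> {z}"
        hence yz: "ys ! k = z" by simp
        have "bs ! k * S = (\<Sum>i<n. 0)"
          unfolding bS by (rule sum.cong) (use yz zn in \<open>auto simp: n_def\<close>)
        hence "bs ! k * S = 0" by simp
        moreover have "bs ! k * d x z = 0" using cz[OF k] yz by simp
        ultimately show ?thesis by (simp add: algebra_simps)
      qed
    qed
    have "(1 + S) * d x z = sum_list bs * ((1 + S) * d x z)" using s1 by simp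
    also have "... = (\<Sum>k<m. bs ! k * (1 + S) * d x z)"
      unfolding sl_nth sum_distrib_right m_def by (simp add: mult.assoc)
    also have "... = 0" using tm by simp
    finally show ?thesis .
  qed
  have G: "pairwise_disj ((1 + S) # as) \<and> sum_list ((1 + S) # as) = 1"
    using genG[OF idem pdas] S_def by simp
  have oc: "orth_comb d z x xs as"
    unfolding orth_comb_def is_conv_comb_def
  proof (intro conjI)
    show "length xs = length as" using las n_def by simp
    show "length (z # xs) = length ((1 + sum_list as) # as)" using las n_def by simp
    show "pairwise_disj ((1 + sum_list as) # as)" using G S_def by simp
    show "sum_list ((1 + sum_list as) # as) = 1" using G S_def by simp
    show "\<forall>i<length (z # xs). ((1 + sum_list as) # as) ! i * d x ((z # xs) ! i) = 0"
    proof (intro allI impI)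
      fix i assume "i < length (z # xs)"
      thus "((1 + sum_list as) # as) ! i * d x ((z # xs) ! i) = 0"
        using F4 F1 asi S_def n_def by (cases i) auto
    qed
  qed
  show ?thesis using las pdas oc F3 n_def by auto
qed

theorem mainTheorem11:
  fixes X :: "'x set" and d :: "'x \<Rightarrow> 'x \<Rightarrow> 'b::comm_ring_1"
    and z :: 'x and xs :: "'x list" and x :: 'x
  assumes "\<And>a::'b. a * a = a"
    and "bool_metric X d" and "convex_bms X d"
    and "z \<in> X"
    and "distinct xs" and "referential X d z (set xs)"
    and "x \<in> X"
  shows "\<exists>!as. length as = length xs \<and>
           (\<forall>i<length as. \<forall>j<length as. i \<noteq> j \<longrightarrow> as ! i * as ! j = 0) \<and>
           orth_comb d z x xs as \<and>
           (\<forall>i<length xs. bleq (as ! i) (d z (xs ! i)))"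
proof -
  note idem = assms(1) and bm = assms(2) and zX = assms(4) and dist = assms(5) and xX = assms(7)
  have xsX: "set xs \<subseteq> X" and zn: "z \<notin> set xs"
    and orth: "\<forall>u\<in>set xs. \<forall>v\<in>set xs. u \<noteq> v \<longrightarrow> bperp d z u v"
    and rep: "\<exists>ys bs. set ys \<subseteq> set xs \<union> {z} \<and> is_conv_comb d x ys bs"
    using assms(6) xX unfolding referential_def by auto
  obtain ys bs where ys: "set ys \<subseteq> set xs \<union> {z}" and cc: "is_conv_comb d x ys bs"
    using rep by blast
  obtain as where as: "length as = length xs \<and> pairwise_disj as \<and> orth_comb d z x xs as \<and>
           (\<forall>i<length xs. bleq (as ! i) (d z (xs ! i)))"
    using exist[OF idem bm zX xX xsX dist zn ys cc] by blast
  show ?thesis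
  proof (rule ex1I[of _ as])
    show "length as = length xs \<and>
           (\<forall>i<length as. \<forall>j<length as. i \<noteq> j \<longrightarrow> as ! i * as ! j = 0) \<and>
           orth_comb d z x xs as \<and>
           (\<forall>i<length xs. bleq (as ! i) (d z (xs ! i)))"
      using as unfolding pairwise_disj_def by blast
  next
    fix bs assume b: "length bs = length xs \<and>
           (\<forall>i<length bs. \<forall>j<length bs. i \<noteq> j \<longrightarrow> bs ! i * bs ! j = 0) \<and>
           orth_comb d z x xs bs \<and>
           (\<forall>i<length xs. bleq (bs ! i) (d z (xs ! i)))"
    have u1: "\<forall>i<length xs. bs ! i = bs ! i * as ! i"
      using uniq[OF idem bm zX xX xsX dist orth, of bs as] b as by blast
    have u2: "\<forall>i<length xs. as ! i = as ! i * bs ! i"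
      using uniq[OF idem bm zX xX xsX dist orth, of as bs] b as by blast
    show "bs = as"
    proof (rule nth_equalityI)
      show "length bs = length as" using as b by simp
      fix i assume "i < length bs"
      hence "i < length xs" using b by simp
      thus "bs ! i = as ! i" using u1 u2 by (metis mult.commute)
    qed
  qed
qed

end
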